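(* Let $f$ be a convex differentiable function that is $L$-relatively smooth with respect to $h$. Then for every $\eta\in(0,1/L]$ and all $x,y\in\operatorname{int}\operatorname{dom}h$, $$D_f(x,y)\ \ge\ \frac1\eta\, D_{h^*}\big(\nabla h(x)-\eta(\nabla f(x)-\nabla f(y)),\ \nabla h(x)\big).$$
   Context: Let $C\subseteq\mathbb{R}^d$ be a closed convex set and $h:\mathbb{R}^d\to\mathbb{R}\cup\{+\infty\}$ a function satisfying the standing assumption: $h$ is twice continuously differentiable and strictly convex on $\operatorname{int} C$, and for every $y\in\mathbb{R}^d$ the problem $\min_{x\in C} h(x)-x^\top y$ has a unique solution, which lies in $\operatorname{int} C$. $h^*(y)=\sup_x x^\top y-h(x)$ is the convex conjugate of $h$ (it is convex and differentiable on $\mathbb{R}^d$ with $\nabla h^*(\nabla h(y))=y$ for $y\in\operatorname{int}C$). For a differentiable convex function $\varphi$, $D_\varphi(x,y)=\varphi(x)-\varphi(y)-\nabla\varphi(y)^\top(x-y)$. A differentiable function $f$ is $L$-relatively smooth and $\mu$-relatively strongly convex with respect to $h$ if $\mu D_h(x,y)\le D_f(x,y)\le L D_h(x,y)$ for all $x,y\in\operatorname{int}\operatorname{dom}h$ (relative smoothness alone refers to the right inequality). *)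

theory Defs
  imports "HOL-Analysis.Analysis"
begin

definition grad :: "('a::euclidean_space \<Rightarrow> real) \<Rightarrow> 'a \<Rightarrow> 'a" where
  "grad \<phi> x = (SOME g. (\<phi> has_derivative (\<lambda>v. g \<bullet> v)) (at x))"

definition bregman :: "('a::euclidean_space \<Rightarrow> real) \<Rightarrow> 'a \<Rightarrow> 'a \<Rightarrow> real" where
  "bregman \<phi> x y = \<phi> x - \<phi> y - grad \<phi> y \<bullet> (x - y)"

definition strict_convex_on :: "'a::real_vector set \<Rightarrow> ('a \<Rightarrow> real) \<Rightarrow> bool" where
  "strict_convex_on S f \<longleftrightarrow>
     (\<forall>x\<in>S. \<forall>y\<in>S. \<forall>t::real. x \<noteq> y \<and> 0 < t \<and> t < 1 \<longrightarrow>
        f ((1 - t) *\<^sub>R x + t *\<^sub>R y) < (1 - t) * f x + t * f y)"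

text \<open>Convex conjugate of h, where h is finite exactly on its domain C (and +infinity outside).\<close>
definition fenchel_conj :: "'a::euclidean_space set \<Rightarrow> ('a \<Rightarrow> real) \<Rightarrow> 'a \<Rightarrow> real" where
  "fenchel_conj C h y = (SUP x\<in>C. x \<bullet> y - h x)"

definition standing_assumption :: "'a::euclidean_space set \<Rightarrow> ('a \<Rightarrow> real) \<Rightarrow> bool" where
  "standing_assumption C h \<longleftrightarrow>
     closed C \<and> convex C \<and>
     (\<exists>h' :: 'a \<Rightarrow> 'a. \<exists>H :: 'a \<Rightarrow> 'a \<Rightarrow>\<^sub>L 'a.
        (\<forall>x\<in>interior C. (h has_derivative (\<lambda>v. h' x \<bullet> v)) (at x)) \<and>
        (\<forall>x\<in>interior C. (h' has_derivative blinfun_apply (H x)) (at x)) \<and>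
        continuous_on (interior C) H) \<and>
     strict_convex_on (interior C) h \<and>
     (\<forall>y. \<exists>!x. x \<in> C \<and> (\<forall>z\<in>C. h x - x \<bullet> y \<le> h z - z \<bullet> y)) \<and>
     (\<forall>y x. x \<in> C \<and> (\<forall>z\<in>C. h x - x \<bullet> y \<le> h z - z \<bullet> y) \<longrightarrow> x \<in> interior C)"

definition rel_smooth :: "'a::euclidean_space set \<Rightarrow> ('a \<Rightarrow> real) \<Rightarrow> real \<Rightarrow> ('a \<Rightarrow> real) \<Rightarrow> bool" where
  "rel_smooth C h L f \<longleftrightarrow>
     (\<forall>x\<in>interior C. \<forall>y\<in>interior C. bregman f x y \<le> L * bregman h x y)"

end

theory Submission
  imports Defs
begin

lemma tangent_ineq:
  fixes f :: "'a::real_normed_vector \<Rightarrow> real"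
  assumes cv: "convex_on S f" and xS: "x \<in> S" and zS: "z \<in> S"
    and D: "(f has_derivative D) (at x)"
  shows "f z \<ge> f x + D (z - x)"
proof -
  let ?d = "z - x"
  interpret bl: bounded_linear D using D by (rule has_derivative_bounded_linear)
  have lin: "((\<lambda>t::real. x + t *\<^sub>R ?d) has_derivative (\<lambda>t. t *\<^sub>R ?d)) (at 0)"
    by (auto intro!: derivative_eq_intros)
  have "((\<lambda>t. f (x + t *\<^sub>R ?d)) has_derivative (\<lambda>t. D (t *\<^sub>R ?d))) (at 0)"
    using has_derivative_compose[OF lin, of f D] D by simp
  then have "((\<lambda>t. f (x + t *\<^sub>R ?d)) has_derivative (\<lambda>t. t * D ?d)) (at 0)"
    by (simp add: bl.scaleR)
  then have "((\<lambda>t. f (x + t *\<^sub>R ?d)) has_real_derivative D ?d) (at 0)"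
    by (simp add: has_field_derivative_def mult.commute[of _ "D ?d"])
  then have "((\<lambda>t. (f (x + (0 + t) *\<^sub>R ?d) - f (x + 0 *\<^sub>R ?d)) / t) \<longlongrightarrow> D ?d) (at 0)"
    unfolding DERIV_def by simp
  then have "((\<lambda>t. (f (x + t *\<^sub>R ?d) - f x) / t) \<longlongrightarrow> D ?d) (at 0)" by simp
  then have lim: "((\<lambda>t. (f (x + t *\<^sub>R ?d) - f x) / t) \<longlongrightarrow> D ?d) (at_right 0)"
    by (rule tendsto_mono[OF at_le[OF subset_UNIV]])
  have ev: "eventually (\<lambda>t. (f (x + t *\<^sub>R ?d) - f x) / t \<le> f z - f x) (at_right (0::real))"
  proof (rule eventually_at_rightI[of _ 1])
    fix t :: real assume "t \<in> {0<..<1}"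
    then have t: "0 < t" "t < 1" by auto
    have "x + t *\<^sub>R ?d = (1 - t) *\<^sub>R x + t *\<^sub>R z" by (simp add: algebra_simps)
    then have "f (x + t *\<^sub>R ?d) \<le> (1 - t) * f x + t * f z"
      using convex_onD[OF cv, of t x z] t xS zS by simp
    then have "f (x + t *\<^sub>R ?d) - f x \<le> t * (f z - f x)" by (simp add: algebra_simps)
    then show "(f (x + t *\<^sub>R ?d) - f x) / t \<le> f z - f x"
      using t by (simp add: divide_simps mult.commute)
  qed simp
  have "D ?d \<le> f z - f x"
    by (rule tendsto_le[OF _ tendsto_const lim ev]) simp
  then show ?thesis by simp
qed


lemma grad_eq:
  assumes "(\<phi> has_derivative (\<lambda>v. g \<bullet> v)) (at x)"
  shows "grad \<phi> x = g"
proof -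
  have ex: "\<exists>g. (\<phi> has_derivative (\<lambda>v. g \<bullet> v)) (at x)" using assms by blast
  have "(\<phi> has_derivative (\<lambda>v. grad \<phi> x \<bullet> v)) (at x)"
    unfolding grad_def by (rule someI_ex[OF ex])
  then have "(\<lambda>v. grad \<phi> x \<bullet> v) = (\<lambda>v. g \<bullet> v)"
    using has_derivative_unique assms by blast
  then have "grad \<phi> x \<bullet> (grad \<phi> x - g) = g \<bullet> (grad \<phi> x - g)" by metis
  then have "(grad \<phi> x - g) \<bullet> (grad \<phi> x - g) = 0" by (simp add: inner_diff_left)
  then show ?thesis by simp
qed

lemma grad_works:
  fixes \<phi> :: "'a::euclidean_space \<Rightarrow> real"
  assumes "\<phi> differentiable (at x)"
  shows "(\<phi> has_derivative (\<lambda>v. grad \<phi> x \<bullet> v)) (at x)"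
proof -
  obtain D where D: "(\<phi> has_derivative D) (at x)" using assms differentiable_def by blast
  have lin: "linear D" using has_derivative_linear[OF D] .
  have "D = (\<lambda>v. adjoint D 1 \<bullet> v)"
  proof
    fix v show "D v = adjoint D 1 \<bullet> v"
      using adjoint_works[OF lin, of v 1] by (simp add: inner_commute)
  qed
  with D have "(\<phi> has_derivative (\<lambda>v. adjoint D 1 \<bullet> v)) (at x)" by simp
  then show ?thesis using grad_eq by metis
qed

lemma conj_attained:
  assumes "z \<in> C" "\<forall>w\<in>C. h z - z \<bullet> u \<le> h w - w \<bullet> u"
  shows "fenchel_conj C h u = z \<bullet> u - h z"
  unfolding fenchel_conj_def
  by (rule cSup_eq_maximum) (use assms in \<open>auto simp: inner_commute\<close>)

theorem lemma3:
  fixes C :: "'a::euclidean_space set" and h f :: "'a \<Rightarrow> real" and L \<eta> :: real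
  assumes SA: "standing_assumption C h"
    and conj_diff: "\<forall>u. fenchel_conj C h differentiable (at u)"
    and f_convex: "convex_on (interior C) f"
    and f_diff: "\<forall>x\<in>interior C. f differentiable (at x)"
    and f_smooth: "rel_smooth C h L f"
    and eta: "0 < \<eta>" "\<eta> \<le> 1 / L"
    and x: "x \<in> interior C" and y: "y \<in> interior C"
  shows "bregman f x y \<ge>
           (1 / \<eta>) * bregman (fenchel_conj C h)
              (grad h x - \<eta> *\<^sub>R (grad f x - grad f y)) (grad h x)"
proof -
  define M where "M = fenchel_conj C h"
  obtain h' :: "'a \<Rightarrow> 'a" where h': "\<forall>x\<in>interior C. (h has_derivative (\<lambda>v. h' x \<bullet> v)) (at x)"
    using SA unfolding standing_assumption_def by blast
  have sc: "strict_convex_on (interior C) h" and cvC: "convex C"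
    and exmin: "\<forall>u. \<exists>!z. z \<in> C \<and> (\<forall>w\<in>C. h z - z \<bullet> u \<le> h w - w \<bullet> u)"
    and inmin: "\<forall>u z. z \<in> C \<and> (\<forall>w\<in>C. h z - z \<bullet> u \<le> h w - w \<bullet> u) \<longrightarrow> z \<in> interior C"
    using SA unfolding standing_assumption_def by blast+
  have cvI: "convex (interior C)" using cvC by (rule convex_interior)
  have hcv: "convex_on (interior C) h"
  proof (rule convex_onI[OF _ cvI])
    fix t :: real and a b assume t: "0 < t" "t < 1" and ab: "a \<in> interior C" "b \<in> interior C"
    show "h ((1 - t) *\<^sub>R a + t *\<^sub>R b) \<le> (1 - t) * h a + t * h b"
    proof (cases "a = b")
      case True then show ?thesis by (simp add: algebra_simps)
    next
      case False
      then have "h ((1 - t) *\<^sub>R a + t *\<^sub>R b) < (1 - t) * h a + t * h b"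
        using sc t ab unfolding strict_convex_on_def by blast
      then show ?thesis by simp
    qed
  qed
  have gh: "\<And>w. w \<in> interior C \<Longrightarrow> grad h w = h' w" using h' grad_eq by blast
  have hder: "\<And>w. w \<in> interior C \<Longrightarrow> (h has_derivative (\<lambda>v. grad h w \<bullet> v)) (at w)"
    using h' gh by simp
  have htan: "\<And>a b. a \<in> interior C \<Longrightarrow> b \<in> interior C \<Longrightarrow> h b \<ge> h a + grad h a \<bullet> (b - a)"
    using tangent_ineq[OF hcv _ _ hder] by blast
  have fder: "\<And>w. w \<in> interior C \<Longrightarrow> (f has_derivative (\<lambda>v. grad f w \<bullet> v)) (at w)"
    using f_diff grad_works by blast
  have ftan: "\<And>a b. a \<in> interior C \<Longrightarrow> b \<in> interior C \<Longrightarrow> f b \<ge> f a + grad f a \<bullet> (b - a)"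
    using tangent_ineq[OF f_convex _ _ fder] by blast
  have xC: "x \<in> C" using x interior_subset by blast
  define p where "p = grad h x"
  obtain x' where x': "x' \<in> C" "\<forall>w\<in>C. h x' - x' \<bullet> p \<le> h w - w \<bullet> p"
    using exmin by blast
  have x'i: "x' \<in> interior C" using inmin x' by blast
  have "h x' \<ge> h x + p \<bullet> (x' - x)" using htan[OF x x'i] p_def by simp
  then have "h x - x \<bullet> p \<le> h x' - x' \<bullet> p" by (simp add: inner_diff_right inner_commute)
  then have xmin: "\<forall>w\<in>C. h x - x \<bullet> p \<le> h w - w \<bullet> p" using x' by force
  have Mp: "M p = x \<bullet> p - h x" unfolding M_def by (rule conj_attained[OF xC xmin])
  have Mge: "\<And>u. M u \<ge> x \<bullet> u - h x"
  proof -
    fix u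
    obtain z where z: "z \<in> C" "\<forall>w\<in>C. h z - z \<bullet> u \<le> h w - w \<bullet> u" using exmin by blast
    have "M u = z \<bullet> u - h z" unfolding M_def by (rule conj_attained[OF z])
    then show "M u \<ge> x \<bullet> u - h x" using z(2) xC by force
  qed
  obtain D where D: "(M has_derivative D) (at p)" using conj_diff M_def differentiable_def by blast
  have kder: "((\<lambda>u. M u - x \<bullet> u) has_derivative (\<lambda>v. D v - x \<bullet> v)) (at p)"
    using D by (intro derivative_eq_intros) auto
  have "(\<lambda>v. D v - x \<bullet> v) = (\<lambda>v. 0)"
  proof (rule has_derivative_local_min[OF kder])
    show "\<forall>\<^sub>F u in at p. M p - x \<bullet> p \<le> M u - x \<bullet> u"
    proof (intro always_eventually allI)
      fix u show "M p - x \<bullet> p \<le> M u - x \<bullet> u" using Mge[of u] Mp by linarith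
    qed
  qed
  then have "D = (\<lambda>v. x \<bullet> v)"
  proof -
    assume e: "(\<lambda>v. D v - x \<bullet> v) = (\<lambda>v. 0)"
    show ?thesis
    proof
      fix v have "D v - x \<bullet> v = 0" using fun_cong[OF e, of v] by simp
      then show "D v = x \<bullet> v" by simp
    qed
  qed
  then have gM: "grad M p = x" using D grad_eq by simp
  define d where "d = grad f x - grad f y"
  define g where "g = p - \<eta> *\<^sub>R d"
  obtain z0 where z0: "z0 \<in> C" "\<forall>w\<in>C. h z0 - z0 \<bullet> g \<le> h w - w \<bullet> g"
    using exmin by blast
  have z0i: "z0 \<in> interior C" using inmin z0 by blast
  have Mg: "M g = z0 \<bullet> g - h z0" unfolding M_def by (rule conj_attained[OF z0])
  have f1: "f z0 \<ge> f y + grad f y \<bullet> (z0 - y)" using ftan[OF y z0i] .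
  have f2: "bregman f z0 x \<le> L * bregman h z0 x"
    using f_smooth z0i x unfolding rel_smooth_def by blast
  have Bh: "bregman h z0 x \<ge> 0" using htan[OF x z0i] unfolding bregman_def by simp
  have Lpos: "L > 0" proof (rule ccontr)
    assume "\<not> L > 0" then have "1 / L \<le> 0" by simp
    then show False using eta by linarith
  qed
  have "L \<le> 1 / \<eta>" using eta Lpos by (simp add: field_simps)
  then have f3: "L * bregman h z0 x \<le> (1 / \<eta>) * bregman h z0 x" using Bh by (rule mult_right_mono)
  define B where "B = bregman h z0 x"
  have Bdef: "B = h z0 - h x - p \<bullet> z0 + p \<bullet> x"
    unfolding B_def bregman_def p_def by (simp add: inner_diff_right)
  have fz: "f z0 \<le> f x + grad f x \<bullet> z0 - grad f x \<bullet> x + (1 / \<eta>) * B"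
    using f2 f3 unfolding B_def bregman_def by (simp add: inner_diff_right)
  have bM: "bregman M g p = (z0 \<bullet> p - h z0 - x \<bullet> p + h x) - \<eta> * (z0 \<bullet> d) + \<eta> * (x \<bullet> d)"
    unfolding bregman_def gM Mg Mp unfolding g_def
    by (simp add: inner_diff_right inner_diff_left)
  have goal_eq: "(1 / \<eta>) * bregman M g p = (1 / \<eta>) * (z0 \<bullet> p - h z0 - x \<bullet> p + h x) - z0 \<bullet> d + x \<bullet> d"
    unfolding bM using eta(1) by (simp add: right_diff_distrib distrib_left)
  have lhs: "bregman f x y = f x - f y - grad f y \<bullet> x + grad f y \<bullet> y"
    unfolding bregman_def by (simp add: inner_diff_right)
  have f1': "f z0 \<ge> f y + grad f y \<bullet> z0 - grad f y \<bullet> y" using f1 by (simp add: inner_diff_right)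
  have dd: "z0 \<bullet> d = grad f x \<bullet> z0 - grad f y \<bullet> z0" "x \<bullet> d = grad f x \<bullet> x - grad f y \<bullet> x"
    unfolding d_def by (simp_all add: inner_diff_right inner_commute)
  have "(1 / \<eta>) * B = - ((1 / \<eta>) * (z0 \<bullet> p - h z0 - x \<bullet> p + h x))"
    unfolding Bdef by (simp add: inner_commute right_diff_distrib distrib_left)
  note e1 = this
  have "bregman f x y \<ge> (1 / \<eta>) * bregman M g p"
    unfolding goal_eq lhs using fz f1' dd e1 by linarith
  then show ?thesis unfolding M_def p_def g_def d_def .
qed

end
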